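(* Let $\lambda\in k$, $\lambda\neq0$. (i) Let $(A,\succ,\prec)$ be a Leibniz-dendriform algebra and $r\in A\otimes A$ such that $S(r)=0$, $r+\tau(r)$ is invariant and $T_{r+\tau(r)}$ is a linear isomorphism (i.e. $(A,\succ,\prec,\Delta_{\succ,r},\Delta_{\prec,r})$ is a factorizable Leibniz-dendriform bialgebra). Define $\omega(x,y)=-\lambda\langle T_{r+\tau(r)}^{-1}(x),y\rangle$ and $P=T_r\omega^\sharp$ (i.e. $P(x)=T_r(\omega^\sharp(x))$). Then $(A,\succ,\prec,P,\omega)$ is a quadratic Rota–Baxter Leibniz-dendriform algebra of weight $\lambda$. (ii) Conversely, let $(A,\succ,\prec,P,\omega)$ be a quadratic Rota–Baxter Leibniz-dendriform algebra of weight $\lambda$, and let $r\in A\otimes A$ be defined by $T_r=P(\omega^\sharp)^{-1}$. Then $S(r)=0$, $r+\tau(r)$ is invariant and $T_{r+\tau(r)}$ is a linear isomorphism; hence $(A,\succ,\prec,\Delta_{\succ,r},\Delta_{\prec,r})$ is a factorizable Leibniz-dendriform bialgebra.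
   Context: $\langle\cdot,\cdot\rangle$ is the natural pairing, $I$ the identity, $\tau(a\otimes b)=b\otimes a$; all spaces finite-dimensional over $k$. A Leibniz-dendriform algebra is a vector space $A$ with bilinear operations $\succ,\prec$ such that, with $x\circ y:=x\succ y+x\prec y$, for all $x,y,z$: $(x\circ y)\succ z=x\succ(y\succ z)-y\succ(x\succ z)$, $y\prec(x\circ z)+(x\succ y)\prec z=x\succ(y\prec z)$, $x\prec(y\circ z)=(x\prec y)\prec z+y\succ(x\prec z)$. Write $x\odot y:=x\succ y+y\prec x$, $x\star y:=x\circ y+y\circ x$; $L_*(x)y=x*y$, $R_*(x)y=y*x$; $L_\odot:=L_\succ+R_\prec$, $L_\star:=L_\circ+R_\circ$. For $r=\sum_ia_i\otimes b_i$: $T_r:A^*\to A$, $\langle T_r(\zeta),\eta\rangle=\langle r,\zeta\otimes\eta\rangle$; $S(r):=\sum_{i,j}\big(a_i\otimes a_j\otimes (b_j\circ b_i)-a_i\otimes (b_i\odot a_j)\otimes b_j-(a_i\succ a_j)\otimes b_i\otimes b_j\big)$. $s\in A\otimes A$ is invariant if for all $x$: $(L_\odot(x)\otimes I-I\otimes R_\circ(x))s=0$ and $(L_\star(x)\otimes I-I\otimes R_\prec(x))\tau(s)=0$. Coboundary maps $\Delta_{\succ,r}(x)=(L_\odot(x)\otimes I-I\otimes R_\circ(x))r$, $\Delta_{\prec,r}(x)=(L_\star(x)\otimes I-I\otimes R_\prec(x))\tau(r)$; the resulting bialgebra is called factorizable when $S(r)=0$, $r+\tau(r)$ is invariant and $T_{r+\tau(r)}$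 is bijective. For a bilinear form $\omega$, $\omega^\sharp:A\to A^*$ is $\langle\omega^\sharp(x),y\rangle=\omega(x,y)$. A quadratic Leibniz-dendriform algebra is one with a non-degenerate symmetric bilinear form $\omega$ with $\omega(x\prec y,z)=\omega(x,y\circ z+z\circ y)$ and $\omega(x\succ y,z)=-\omega(y,x\circ z)$ for all $x,y,z$. A Rota–Baxter operator of weight $\lambda$ on $(A,\succ,\prec)$ is a linear $P$ with $P(x)\succ P(y)=P(P(x)\succ y+x\succ P(y)+\lambda x\succ y)$ and $P(x)\prec P(y)=P(P(x)\prec y+x\prec P(y)+\lambda x\prec y)$. $(A,\succ,\prec,P,\omega)$ is a quadratic Rota–Baxter Leibniz-dendriform algebra of weight $\lambda$ if $(A,\succ,\prec,\omega)$ is quadratic, $P$ is a Rota–Baxter operator of weight $\lambda$, and $\omega(P(x),y)+\omega(x,P(y))+\lambda\omega(x,y)=0$ for all $x,y$. *)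

theory Defs
  imports Main "HOL-Library.Function_Algebras"
begin

(* Conventions: the finite-dimensional space A is identified with k^n, i.e. functions
   'n \<Rightarrow> 'k for a finite index type 'n (coordinates w.r.t. a fixed basis e_i).
   A* is also represented by 'n \<Rightarrow> 'k (coordinates w.r.t. the dual basis),
   A \<otimes> A by 'n \<Rightarrow> 'n \<Rightarrow> 'k, A \<otimes> A \<otimes> A by 'n \<Rightarrow> 'n \<Rightarrow> 'n \<Rightarrow> 'k. *)

definition smul :: "'k::field \<Rightarrow> ('n \<Rightarrow> 'k) \<Rightarrow> ('n \<Rightarrow> 'k)" where
  "smul c x = (\<lambda>i. c * x i)"

definition lin :: "(('n \<Rightarrow> 'k::field) \<Rightarrow> ('m \<Rightarrow> 'k)) \<Rightarrow> bool" where
  "lin f \<longleftrightarrow> (\<forall>x y. f (x + y) = f x + f y) \<and> (\<forall>c x. f (smul c x) = smul c (f x))"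

definition bilin :: "(('n \<Rightarrow> 'k::field) \<Rightarrow> ('n \<Rightarrow> 'k) \<Rightarrow> ('n \<Rightarrow> 'k)) \<Rightarrow> bool" where
  "bilin op \<longleftrightarrow> (\<forall>x. lin (op x)) \<and> (\<forall>y. lin (\<lambda>x. op x y))"

definition bilin_form :: "(('n \<Rightarrow> 'k::field) \<Rightarrow> ('n \<Rightarrow> 'k) \<Rightarrow> 'k) \<Rightarrow> bool" where
  "bilin_form w \<longleftrightarrow>
     (\<forall>x y z. w (x + y) z = w x z + w y z) \<and> (\<forall>c x z. w (smul c x) z = c * w x z) \<and>
     (\<forall>x y z. w x (y + z) = w x y + w x z) \<and> (\<forall>c x z. w x (smul c z) = c * w x z)"

definition circ where "circ succ prec x y = succ x y + prec x y"
definition odot where "odot succ prec x y = succ x y + prec y x"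
definition star where "star succ prec x y = circ succ prec x y + circ succ prec y x"

definition LDA :: "(('n \<Rightarrow> 'k::field) \<Rightarrow> ('n \<Rightarrow> 'k) \<Rightarrow> ('n \<Rightarrow> 'k)) \<Rightarrow> (('n \<Rightarrow> 'k) \<Rightarrow> ('n \<Rightarrow> 'k) \<Rightarrow> ('n \<Rightarrow> 'k)) \<Rightarrow> bool" where
  "LDA succ prec \<longleftrightarrow> bilin succ \<and> bilin prec \<and>
    (\<forall>x y z.
       succ (circ succ prec x y) z = succ x (succ y z) - succ y (succ x z) \<and>
       prec y (circ succ prec x z) + prec (succ x y) z = succ x (prec y z) \<and>
       prec x (circ succ prec y z) = prec (prec x y) z + succ y (prec x z))"

definition basis :: "'n \<Rightarrow> ('n \<Rightarrow> 'k::field)" where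
  "basis i = (\<lambda>j. if j = i then 1 else 0)"

definition pairing :: "('n::finite \<Rightarrow> 'k::field) \<Rightarrow> ('n \<Rightarrow> 'k) \<Rightarrow> 'k" where
  "pairing z x = (\<Sum>i\<in>UNIV. z i * x i)"

definition tensor2 :: "('n \<Rightarrow> 'k::field) \<Rightarrow> ('n \<Rightarrow> 'k) \<Rightarrow> ('n \<Rightarrow> 'n \<Rightarrow> 'k)" where
  "tensor2 u v = (\<lambda>a b. u a * v b)"

definition tensor3 :: "('n \<Rightarrow> 'k::field) \<Rightarrow> ('n \<Rightarrow> 'k) \<Rightarrow> ('n \<Rightarrow> 'k) \<Rightarrow> ('n \<Rightarrow> 'n \<Rightarrow> 'n \<Rightarrow> 'k)" where
  "tensor3 u v w = (\<lambda>a b c. u a * v b * w c)"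

(* (f \<otimes> g) s for linear f, g *)
definition tmap :: "(('n::finite \<Rightarrow> 'k::field) \<Rightarrow> ('n \<Rightarrow> 'k)) \<Rightarrow> (('n \<Rightarrow> 'k) \<Rightarrow> ('n \<Rightarrow> 'k)) \<Rightarrow> ('n \<Rightarrow> 'n \<Rightarrow> 'k) \<Rightarrow> ('n \<Rightarrow> 'n \<Rightarrow> 'k)" where
  "tmap f g s = (\<Sum>i\<in>UNIV. \<Sum>j\<in>UNIV. tensor2 (smul (s i j) (f (basis i))) (g (basis j)))"

definition tau :: "('n \<Rightarrow> 'n \<Rightarrow> 'k) \<Rightarrow> ('n \<Rightarrow> 'n \<Rightarrow> 'k)" where
  "tau s = (\<lambda>a b. s b a)"

(* T_r : A* \<rightarrow> A,  <T_r z, w> = <r, z \<otimes> w> *)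
definition Tr :: "('n::finite \<Rightarrow> 'n \<Rightarrow> 'k::field) \<Rightarrow> ('n \<Rightarrow> 'k) \<Rightarrow> ('n \<Rightarrow> 'k)" where
  "Tr r z = (\<lambda>j. \<Sum>i\<in>UNIV. r i j * z i)"

(* S(r) for r = \<Sum>_{i,j} (r_ij e_i) \<otimes> e_j *)
definition Sop :: "(('n::finite \<Rightarrow> 'k::field) \<Rightarrow> ('n \<Rightarrow> 'k) \<Rightarrow> ('n \<Rightarrow> 'k)) \<Rightarrow> (('n \<Rightarrow> 'k) \<Rightarrow> ('n \<Rightarrow> 'k) \<Rightarrow> ('n \<Rightarrow> 'k)) \<Rightarrow> ('n \<Rightarrow> 'n \<Rightarrow> 'k) \<Rightarrow> ('n \<Rightarrow> 'n \<Rightarrow> 'n \<Rightarrow> 'k)" where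
  "Sop succ prec r = (\<Sum>i\<in>UNIV. \<Sum>j\<in>UNIV. \<Sum>k\<in>UNIV. \<Sum>l\<in>UNIV.
      tensor3 (smul (r i j * r k l) (basis i)) (basis k) (circ succ prec (basis l) (basis j))
    - tensor3 (smul (r i j * r k l) (basis i)) (odot succ prec (basis j) (basis k)) (basis l)
    - tensor3 (smul (r i j * r k l) (succ (basis i) (basis k))) (basis j) (basis l))"

definition invariant where
  "invariant succ prec s \<longleftrightarrow> (\<forall>x.
     tmap (odot succ prec x) id s - tmap id (\<lambda>y. circ succ prec y x) s = 0 \<and>
     tmap (star succ prec x) id (tau s) - tmap id (\<lambda>y. prec y x) (tau s) = 0)"

definition factorizable where
  "factorizable succ prec r \<longleftrightarrow> Sop succ prec r = 0 \<and> invariant succ prec (r + tau r) \<and>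
     bij (Tr (r + tau r))"

definition sharp :: "(('n \<Rightarrow> 'k::field) \<Rightarrow> ('n \<Rightarrow> 'k) \<Rightarrow> 'k) \<Rightarrow> ('n \<Rightarrow> 'k) \<Rightarrow> ('n \<Rightarrow> 'k)" where
  "sharp w x = (\<lambda>i. w x (basis i))"

definition quadratic where
  "quadratic succ prec w \<longleftrightarrow> LDA succ prec \<and> bilin_form w \<and> (\<forall>x y. w x y = w y x) \<and>
     (\<forall>x. (\<forall>y. w x y = 0) \<longrightarrow> x = 0) \<and>
     (\<forall>x y z. w (prec x y) z = w x (circ succ prec y z + circ succ prec z y)) \<and>
     (\<forall>x y z. w (succ x y) z = - w y (circ succ prec x z))"

definition RB_op where
  "RB_op succ prec lam P \<longleftrightarrow> lin P \<and> (\<forall>x y.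
     succ (P x) (P y) = P (succ (P x) y + succ x (P y) + smul lam (succ x y)) \<and>
     prec (P x) (P y) = P (prec (P x) y + prec x (P y) + smul lam (prec x y)))"

definition quadRB where
  "quadRB succ prec P w lam \<longleftrightarrow> quadratic succ prec w \<and> RB_op succ prec lam P \<and>
     (\<forall>x y. w (P x) y + w x (P y) + lam * w x y = 0)"

end

theory Submission
  imports Defs "HOL-Analysis.Cartesian_Space"
begin


lemma fsum_apply: "(\<Sum>i\<in>S. f i) x = (\<Sum>i\<in>S. f i x)"
  for f :: "'a \<Rightarrow> 'b \<Rightarrow> 'c::comm_monoid_add"
  by (induction S rule: infinite_finite_induct) auto

lemma smul_apply[simp]: "smul c x i = c * x i" by (simp add: smul_def)
lemma basis_apply: "basis i j = (if j = i then 1 else 0)" by (simp add: basis_def)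

lemma lin_add: "lin f \<Longrightarrow> f (x+y) = f x + f y" by (simp add: lin_def)
lemma lin_smul: "lin f \<Longrightarrow> f (smul c x) = smul c (f x)" by (simp add: lin_def)
lemma lin_zero: "lin f \<Longrightarrow> f 0 = 0"
proof -
  assume l: "lin f"
  have "f 0 = f (smul 0 0)" by (simp add: smul_def zero_fun_def)
  also have "\<dots> = smul 0 (f 0)" using lin_smul[OF l] by blast
  also have "\<dots> = 0" by (simp add: smul_def zero_fun_def)
  finally show ?thesis .
qed
lemma lin_sum: "lin f \<Longrightarrow> f (\<Sum>i\<in>S. g i) = (\<Sum>i\<in>S. f (g i))"
  by (induction S rule: infinite_finite_induct) (auto simp: lin_zero lin_add)
lemma lin_neg: "lin f \<Longrightarrow> f (- x) = - f x"
proof -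
  assume l: "lin f"
  have "-x = smul (-1) x" by (rule ext) simp
  then have "f (-x) = f (smul (-1) x)" by simp
  also have "\<dots> = smul (-1) (f x)" using lin_smul[OF l] by blast
  finally show ?thesis by (simp add: smul_def fun_eq_iff)
qed
lemma lin_diff: "lin f \<Longrightarrow> f (x - y) = f x - f y"
  using lin_add[of f x "-y"] lin_neg[of f y] by simp

lemma vec_expand: "x = (\<Sum>a\<in>UNIV. smul (x a) (basis a))"
  for x :: "'n::finite \<Rightarrow> 'k::field"
  by (rule ext) (simp add: fsum_apply basis_apply if_distrib cong: if_cong)

lemma lin_expand: "lin f \<Longrightarrow> f x = (\<Sum>a\<in>UNIV. smul (x a) (f (basis a)))"
  for x :: "'n::finite \<Rightarrow> 'k::field"
proof -
  assume l: "lin f"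
  have "f x = f (\<Sum>a\<in>UNIV. smul (x a) (basis a))" using vec_expand[of x] by simp
  then show ?thesis by (simp only: lin_sum[OF l] lin_smul[OF l])
qed

lemma lin_comp: "lin f \<Longrightarrow> lin g \<Longrightarrow> lin (\<lambda>x. f (g x))"
  by (simp add: lin_def)
lemma lin_id: "lin (\<lambda>x. x)" by (simp add: lin_def)

definition lf :: "(('n \<Rightarrow> 'k::field) \<Rightarrow> 'k) \<Rightarrow> bool" where
  "lf f \<longleftrightarrow> (\<forall>x y. f (x + y) = f x + f y) \<and> (\<forall>c x. f (smul c x) = c * f x)"

lemma lf_zero: "lf f \<Longrightarrow> f 0 = 0"
proof -
  assume l: "lf f"
  have "f 0 = f (smul 0 0)" by (simp add: smul_def zero_fun_def)
  also have "\<dots> = 0 * f 0" using l unfolding lf_def by blast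
  finally show ?thesis by simp
qed
lemma lf_sum: "lf f \<Longrightarrow> f (\<Sum>i\<in>S. g i) = (\<Sum>i\<in>S. f (g i))"
  by (induction S rule: infinite_finite_induct) (auto simp: lf_zero lf_def)
lemma lf_expand: "lf f \<Longrightarrow> f x = (\<Sum>a\<in>UNIV. x a * f (basis a))"
  for x :: "'n::finite \<Rightarrow> 'k::field"
proof -
  assume l: "lf f"
  have "f x = f (\<Sum>a\<in>UNIV. smul (x a) (basis a))" using vec_expand[of x] by simp
  then show ?thesis using l by (simp add: lf_sum[OF l] lf_def)
qed
lemma lf_basis0: "lf f \<Longrightarrow> (\<And>a. f (basis a) = 0) \<Longrightarrow> f x = 0"
  for x :: "'n::finite \<Rightarrow> 'k::field"
  by (subst lf_expand) auto

lemma lf_diff: "lf f \<Longrightarrow> lf g \<Longrightarrow> lf (\<lambda>x. f x - g x)"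
  by (simp add: lf_def algebra_simps)
lemma lf_add: "lf f \<Longrightarrow> lf g \<Longrightarrow> lf (\<lambda>x. f x + g x)"
  by (simp add: lf_def algebra_simps)

lemma pairing_lf1: "lf (\<lambda>z. pairing z u)"
  by (simp add: lf_def pairing_def sum.distrib sum_distrib_left algebra_simps)
lemma pairing_lf2: "lf (\<lambda>u. pairing z u)"
  by (simp add: lf_def pairing_def sum.distrib sum_distrib_left algebra_simps)
lemma pairing_lin: "lin f \<Longrightarrow> lf (\<lambda>x. pairing z (f x))"
  by (simp add: lf_def pairing_def lin_add lin_smul sum.distrib sum_distrib_left algebra_simps)
lemma pairing_basis1: "pairing (basis a) u = u a"
proof -
  have "pairing (basis a) u = (\<Sum>i\<in>UNIV. if i = a then u i else 0)"
    unfolding pairing_def basis_apply by (rule sum.cong) auto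
  then show ?thesis by simp
qed
lemma pairing_basis2: "pairing z (basis a) = z a"
proof -
  have "pairing z (basis a) = (\<Sum>i\<in>UNIV. if i = a then z i else 0)"
    unfolding pairing_def basis_apply by (rule sum.cong) auto
  then show ?thesis by simp
qed
lemma pairing_sym: "pairing z u = pairing u z"
  by (simp add: pairing_def mult.commute)

lemma Tr_lin: "lin (Tr r)"
  by (simp add: lin_def Tr_def fun_eq_iff sum.distrib sum_distrib_left algebra_simps)
lemma Tr_add: "Tr (r + s) z = Tr r z + Tr s z"
  by (simp add: Tr_def fun_eq_iff sum.distrib algebra_simps)
lemma Tr_basis: "Tr r (basis b) = (\<lambda>j. r b j)"
  by (simp add: Tr_def basis_apply if_distrib cong: if_cong)
lemma Tr_tau: "pairing y (Tr (tau r) x) = pairing x (Tr r y)"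
  unfolding pairing_def Tr_def tau_def
  by (simp add: sum_distrib_left sum_distrib_right algebra_simps) (rule sum.swap)

lemma bilin_l: "bilin op \<Longrightarrow> lin (op x)" by (simp add: bilin_def)
lemma bilin_r: "bilin op \<Longrightarrow> lin (\<lambda>x. op x y)" by (simp add: bilin_def)

lemma bilin_expand: "bilin op \<Longrightarrow> op x y = (\<Sum>l\<in>UNIV. \<Sum>j\<in>UNIV. smul (x l * y j) (op (basis l) (basis j)))"
  for x :: "'n::finite \<Rightarrow> 'k::field"
proof -
  assume b: "bilin op"
  have "op x y = (\<Sum>l\<in>UNIV. smul (x l) (op (basis l) y))"
    using lin_expand[OF bilin_r[OF b], of x] .
  also have "\<dots> = (\<Sum>l\<in>UNIV. smul (x l) (\<Sum>j\<in>UNIV. smul (y j) (op (basis l) (basis j))))"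
    using lin_expand[OF bilin_l[OF b]] by metis
  also have "\<dots> = (\<Sum>l\<in>UNIV. \<Sum>j\<in>UNIV. smul (x l * y j) (op (basis l) (basis j)))"
    by (simp add: smul_def fun_eq_iff fsum_apply sum_distrib_left mult.assoc)
  finally show ?thesis .
qed

lemma bilin_circ: "bilin s \<Longrightarrow> bilin p \<Longrightarrow> bilin (circ s p)"
  by (simp add: bilin_def lin_def circ_def fun_eq_iff algebra_simps)
lemma bilin_odot: "bilin s \<Longrightarrow> bilin p \<Longrightarrow> bilin (odot s p)"
  by (simp add: bilin_def lin_def odot_def fun_eq_iff algebra_simps)
lemma bilin_star: "bilin s \<Longrightarrow> bilin p \<Longrightarrow> bilin (star s p)"
  by (simp add: bilin_def lin_def star_def circ_def fun_eq_iff algebra_simps)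


lemma mult_delta_r: "x * (if P then 1 else 0) = (if P then x else (0::'a::semiring_1))" by simp
lemma mult_delta_l: "(if P then 1 else 0) * x = (if P then x else (0::'a::semiring_1))" by simp
lemma mult_if0_l: "(if P then y else 0) * x = (if P then y * x else (0::'a::semiring_1))" by simp
lemma sum_if_out: "(\<Sum>x\<in>S. if P then f x else 0) = (if P then (\<Sum>x\<in>S. f x) else (0::'a::comm_monoid_add))" by simp

lemma Sop_comp_raw: "Sop s p r a b c =
   (\<Sum>l\<in>UNIV. \<Sum>j\<in>UNIV. r b l * r a j * circ s p (basis l) (basis j) c)
 - (\<Sum>l\<in>UNIV. \<Sum>j\<in>UNIV. r a l * r j c * odot s p (basis l) (basis j) b)
 - (\<Sum>l\<in>UNIV. \<Sum>j\<in>UNIV. r l b * r j c * s (basis l) (basis j) a)"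
  unfolding Sop_def
  apply (simp add: fsum_apply tensor3_def basis_apply sum_subtractf mult_delta_r mult_delta_l mult_if0_l sum_if_out)
  apply (subst sum.swap, simp add: mult_ac)
  done

lemma Sop_comp: "bilin s \<Longrightarrow> bilin p \<Longrightarrow> Sop s p r a b c =
    circ s p (Tr r (basis b)) (Tr r (basis a)) c
  - odot s p (Tr r (basis a)) (Tr (tau r) (basis c)) b
  - s (Tr (tau r) (basis b)) (Tr (tau r) (basis c)) a"
  apply (subst bilin_expand[of "circ s p"], simp add: bilin_circ)
  apply (subst bilin_expand[of "odot s p"], simp add: bilin_odot)
  apply (subst bilin_expand[of "s"], simp)
  apply (simp add: Sop_comp_raw Tr_basis tau_def fsum_apply)
  done


definition Gf where
  "Gf sc pr r xi eta zeta = pairing zeta (circ sc pr (Tr r eta) (Tr r xi))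
     - pairing eta (odot sc pr (Tr r xi) (Tr (tau r) zeta))
     - pairing xi (sc (Tr (tau r) eta) (Tr (tau r) zeta))"

lemma Sop_Gf: "bilin s \<Longrightarrow> bilin p \<Longrightarrow> Sop s p r a b c = Gf s p r (basis a) (basis b) (basis c)"
  by (simp add: Sop_comp Gf_def pairing_basis1)

lemma Gf_lf1: "bilin s \<Longrightarrow> bilin p \<Longrightarrow> lf (\<lambda>xi. Gf s p r xi eta zeta)"
  unfolding Gf_def
  by (intro lf_diff pairing_lin pairing_lf1; rule lin_comp[OF bilin_l] lin_comp[OF bilin_r] lin_comp[OF bilin_l[OF bilin_circ]] lin_comp[OF bilin_r[OF bilin_circ]] lin_comp[OF bilin_l[OF bilin_odot]] lin_comp[OF bilin_r[OF bilin_odot]]; (assumption | rule Tr_lin))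
lemma Gf_lf2: "bilin s \<Longrightarrow> bilin p \<Longrightarrow> lf (\<lambda>eta. Gf s p r xi eta zeta)"
  unfolding Gf_def
  by (intro lf_diff pairing_lin pairing_lf1; rule lin_comp[OF bilin_l] lin_comp[OF bilin_r] lin_comp[OF bilin_l[OF bilin_circ]] lin_comp[OF bilin_r[OF bilin_circ]] lin_comp[OF bilin_l[OF bilin_odot]] lin_comp[OF bilin_r[OF bilin_odot]]; (assumption | rule Tr_lin))
lemma Gf_lf3: "bilin s \<Longrightarrow> bilin p \<Longrightarrow> lf (\<lambda>zeta. Gf s p r xi eta zeta)"
  unfolding Gf_def
  by (intro lf_diff pairing_lin pairing_lf1; rule lin_comp[OF bilin_l] lin_comp[OF bilin_r] lin_comp[OF bilin_l[OF bilin_circ]] lin_comp[OF bilin_r[OF bilin_circ]] lin_comp[OF bilin_l[OF bilin_odot]] lin_comp[OF bilin_r[OF bilin_odot]]; (assumption | rule Tr_lin))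

lemma Sop_zero_iff: "bilin s \<Longrightarrow> bilin p \<Longrightarrow> Sop s p r = 0 \<longleftrightarrow> (\<forall>xi eta zeta. Gf s p r xi eta zeta = 0)"
proof
  assume bs: "bilin s" and bp: "bilin p" and S: "Sop s p r = 0"
  have b: "Gf s p r (basis a) (basis b) (basis c) = 0" for a b c
    using S Sop_Gf[OF bs bp, of r a b c] by (simp add: zero_fun_def)
  have b2: "Gf s p r (basis a) (basis b) zeta = 0" for a b zeta
    by (rule lf_basis0[OF Gf_lf3[OF bs bp]]) (rule b)
  have b3: "Gf s p r (basis a) eta zeta = 0" for a eta zeta
    by (rule lf_basis0[OF Gf_lf2[OF bs bp]]) (rule b2)
  show "\<forall>xi eta zeta. Gf s p r xi eta zeta = 0"
    using lf_basis0[OF Gf_lf1[OF bs bp]] b3 by blast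
next
  assume bs: "bilin s" and bp: "bilin p" and G: "\<forall>xi eta zeta. Gf s p r xi eta zeta = 0"
  show "Sop s p r = 0"
    using G by (simp add: fun_eq_iff Sop_Gf[OF bs bp])
qed

lemma bf_add1: "bilin_form w \<Longrightarrow> w (x + y) z = w x z + w y z" by (simp add: bilin_form_def)
lemma bf_add2: "bilin_form w \<Longrightarrow> w x (y + z) = w x y + w x z" by (simp add: bilin_form_def)
lemma bf_smul1: "bilin_form w \<Longrightarrow> w (smul c x) z = c * w x z" by (simp add: bilin_form_def)
lemma bf_smul2: "bilin_form w \<Longrightarrow> w x (smul c z) = c * w x z" by (simp add: bilin_form_def)
lemma neg_smul: "- x = smul (-1) x" by (rule ext) simp
lemma bf_neg1: "bilin_form w \<Longrightarrow> w (- x) z = - w x z"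
  by (simp add: neg_smul[of x] bf_smul1 del: smul_apply)
lemma bf_neg2: "bilin_form w \<Longrightarrow> w x (- z) = - w x z"
  by (simp add: neg_smul[of z] bf_smul2 del: smul_apply)
lemma bf_diff1: "bilin_form w \<Longrightarrow> w (x - y) z = w x z - w y z"
  using bf_add1[of w x "-y" z] bf_neg1[of w y z] by simp
lemma bf_diff2: "bilin_form w \<Longrightarrow> w x (y - z) = w x y - w x z"
  using bf_add2[of w x y "-z"] bf_neg2[of w x z] by simp



locale core =
  fixes sc pr :: "('n::finite \<Rightarrow> 'k::field) \<Rightarrow> ('n \<Rightarrow> 'k) \<Rightarrow> ('n \<Rightarrow> 'k)"
    and w :: "('n \<Rightarrow> 'k) \<Rightarrow> ('n \<Rightarrow> 'k) \<Rightarrow> 'k"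
    and W P :: "('n \<Rightarrow> 'k) \<Rightarrow> ('n \<Rightarrow> 'k)"
    and r :: "'n \<Rightarrow> 'n \<Rightarrow> 'k" and lam :: 'k
  assumes bs: "bilin sc" and bp: "bilin pr" and bf: "bilin_form w"
    and sym: "\<And>x y. w x y = w y x"
    and nd: "\<And>x. (\<And>y. w x y = 0) \<Longrightarrow> x = 0"
    and Wsurj: "surj W" and Wp: "\<And>x u. pairing (W x) u = w x u"
    and TrW: "\<And>x. Tr r (W x) = P x"
    and TrtW: "\<And>x. Tr (tau r) (W x) = - (P x + smul lam x)"
    and linP: "lin P"
    and compat: "\<And>x y. w (P x) y + w x (P y) + lam * w x y = 0"
begin

abbreviation "ci \<equiv> circ sc pr"

lemma bc: "bilin ci" using bilin_circ[OF bs bp] .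
lemma bo: "bilin (odot sc pr)" using bilin_odot[OF bs bp] .

lemma H_eq:
  assumes q1: "\<And>x y z. w (pr x y) z = w x (ci y z + ci z y)"
    and q2: "\<And>x y z. w (sc x y) z = - w y (ci x z)"
  shows "Gf sc pr r (W x) (W y) (W z) =
     w z (ci (P y) (P x) - P (ci y (P x) + ci (P y) x + smul lam (ci y x)))"
proof -
  define Qz where "Qz = P z + smul lam z"
  define Qy where "Qy = P y + smul lam y"
  have a: "odot sc pr (P x) (- Qz) = - odot sc pr (P x) Qz"
    using lin_neg[OF bilin_l[OF bo]] .
  have b: "sc (- Qy) (- Qz) = sc Qy Qz"
    using lin_neg[OF bilin_l[OF bs]] lin_neg[OF bilin_r[OF bs]] by simp
  have c: "w y (odot sc pr (P x) Qz) = w Qz (ci y (P x))"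
  proof -
    have "w y (odot sc pr (P x) Qz) = w (sc (P x) Qz) y + w (pr Qz (P x)) y"
      by (simp add: sym[of y] odot_def bf_add1[OF bf])
    also have "\<dots> = - w Qz (ci (P x) y) + w Qz (ci (P x) y + ci y (P x))"
      using q1 q2 by simp
    also have "\<dots> = w Qz (ci y (P x))" by (simp add: bf_add2[OF bf])
    finally show ?thesis .
  qed
  have d: "w x (sc Qy Qz) = - w Qz (ci Qy x)"
    using q2 sym by metis
  have e: "w Qz u = - w z (P u)" for u
  proof -
    have "w (P z) u + lam * w z u + w z (P u) = 0" using compat[of z u] by (simp add: algebra_simps)
    then have "w (P z) u + lam * w z u = - w z (P u)" by (simp add: eq_neg_iff_add_eq_0)
    then show ?thesis by (simp add: Qz_def bf_add1[OF bf] bf_smul1[OF bf])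
  qed
  have f: "ci Qy x = ci (P y) x + smul lam (ci y x)"
    unfolding Qy_def by (simp add: lin_add[OF bilin_r[OF bc]] lin_smul[OF bilin_r[OF bc]])
  have "Gf sc pr r (W x) (W y) (W z) = w z (ci (P y) (P x)) + w y (odot sc pr (P x) Qz) - w x (sc Qy Qz)"
    unfolding Gf_def TrW TrtW Wp Qz_def[symmetric] Qy_def[symmetric] a b
    by (simp add: bf_neg2[OF bf])
  also have "\<dots> = w z (ci (P y) (P x)) - w z (P (ci y (P x))) - w z (P (ci Qy x))"
    unfolding c d e by simp
  also have "\<dots> = w z (ci (P y) (P x) - P (ci y (P x) + ci (P y) x + smul lam (ci y x)))"
    unfolding f by (simp add: lin_add[OF linP] bf_diff2[OF bf] bf_add2[OF bf])
  finally show ?thesis .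
qed

lemma Sop_iff:
  assumes q1: "\<And>x y z. w (pr x y) z = w x (ci y z + ci z y)"
    and q2: "\<And>x y z. w (sc x y) z = - w y (ci x z)"
  shows "Sop sc pr r = 0 \<longleftrightarrow>
    (\<forall>x y. ci (P y) (P x) = P (ci y (P x) + ci (P y) x + smul lam (ci y x)))"
proof -
  have "Sop sc pr r = 0 \<longleftrightarrow> (\<forall>x y z. Gf sc pr r (W x) (W y) (W z) = 0)"
    unfolding Sop_zero_iff[OF bs bp] using Wsurj by (metis surjD)
  also have "\<dots> \<longleftrightarrow> (\<forall>x y z. w z (ci (P y) (P x) - P (ci y (P x) + ci (P y) x + smul lam (ci y x))) = 0)"
    unfolding H_eq[OF q1 q2] ..
  also have "\<dots> \<longleftrightarrow> (\<forall>x y. ci (P y) (P x) = P (ci y (P x) + ci (P y) x + smul lam (ci y x)))"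
  proof
    assume h: "\<forall>x y z. w z (ci (P y) (P x) - P (ci y (P x) + ci (P y) x + smul lam (ci y x))) = 0"
    show "\<forall>x y. ci (P y) (P x) = P (ci y (P x) + ci (P y) x + smul lam (ci y x))"
    proof (intro allI)
      fix x y
      have "ci (P y) (P x) - P (ci y (P x) + ci (P y) x + smul lam (ci y x)) = 0"
        by (rule nd) (use h sym in metis)
      then show "ci (P y) (P x) = P (ci y (P x) + ci (P y) x + smul lam (ci y x))" by simp
    qed
  next
    assume "\<forall>x y. ci (P y) (P x) = P (ci y (P x) + ci (P y) x + smul lam (ci y x))"
    then show "\<forall>x y z. w z (ci (P y) (P x) - P (ci y (P x) + ci (P y) x + smul lam (ci y x))) = 0"
      using bf_diff2[OF bf, of _ 0 0] by simp
  qed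
  finally show ?thesis .
qed

end


lemma mult_if0_r: "x * (if P then y else 0) = (if P then x * y else (0::'a::semiring_1))" by simp

lemma tmap_f_id: "lin f \<Longrightarrow> tmap f id s a b = f (Tr (tau s) (basis b)) a"
proof -
  assume l: "lin f"
  have "f (Tr (tau s) (basis b)) = (\<Sum>i\<in>UNIV. smul (s i b) (f (basis i)))"
    using lin_expand[OF l, of "Tr (tau s) (basis b)"] by (simp add: Tr_basis tau_def)
  then show ?thesis
    by (simp add: tmap_def fsum_apply tensor2_def basis_apply mult_delta_r mult_if0_l mult_if0_r sum_if_out mult_ac)
qed

lemma tmap_id_g: "lin g \<Longrightarrow> tmap id g s a b = g (Tr s (basis a)) b"
proof -
  assume l: "lin g"
  have "g (Tr s (basis a)) = (\<Sum>i\<in>UNIV. smul (s a i) (g (basis i)))"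
    using lin_expand[OF l, of "Tr s (basis a)"] by (simp add: Tr_basis)
  then show ?thesis
    by (simp add: tmap_def fsum_apply tensor2_def basis_apply mult_delta_r mult_delta_l mult_if0_l mult_if0_r sum_if_out mult_ac)
qed

lemma tm_iff:
  assumes f: "lin f" and g: "lin g"
  shows "(tmap f id s - tmap id g s = 0) \<longleftrightarrow>
     (\<forall>xi eta. pairing xi (f (Tr (tau s) eta)) = pairing eta (g (Tr s xi)))"
proof -
  define F where "F xi eta = pairing xi (f (Tr (tau s) eta)) - pairing eta (g (Tr s xi))" for xi eta
  have l1: "lf (\<lambda>xi. F xi eta)" for eta
    unfolding F_def by (intro lf_diff pairing_lf1 pairing_lin lin_comp[OF g Tr_lin])
  have l2: "lf (\<lambda>eta. F xi eta)" for xi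
    unfolding F_def by (intro lf_diff pairing_lf1 pairing_lin lin_comp[OF f Tr_lin])
  have comp: "(tmap f id s - tmap id g s) a b = F (basis a) (basis b)" for a b
    by (simp add: F_def tmap_f_id[OF f] tmap_id_g[OF g] pairing_basis1)
  have "(tmap f id s - tmap id g s = 0) \<longleftrightarrow> (\<forall>a b. F (basis a) (basis b) = 0)"
    by (simp add: fun_eq_iff comp[symmetric] del: minus_apply)
  also have "\<dots> \<longleftrightarrow> (\<forall>xi eta. F xi eta = 0)"
  proof
    assume h: "\<forall>a b. F (basis a) (basis b) = 0"
    have "F (basis a) eta = 0" for a eta by (rule lf_basis0[OF l2]) (use h in blast)
    then show "\<forall>xi eta. F xi eta = 0" using lf_basis0[OF l1] by blast
  qed blast
  finally show ?thesis by (simp add: F_def)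
qed


lemma inv_iff:
  fixes sc pr :: "('n::finite \<Rightarrow> 'k::field) \<Rightarrow> ('n \<Rightarrow> 'k) \<Rightarrow> ('n \<Rightarrow> 'k)"
  assumes bs: "bilin sc" and bp: "bilin pr" and bf: "bilin_form w"
    and sym: "\<And>x y. w x y = w y x"
    and Wsurj: "surj W" and Wp: "\<And>x u. pairing (W x) u = w x u"
    and tS: "tau S = S" and TS: "\<And>x. Tr S (W x) = smul c x" and c: "c \<noteq> 0"
  shows "invariant sc pr S \<longleftrightarrow>
     (\<forall>x y z. w (pr x y) z = w x (circ sc pr y z + circ sc pr z y)) \<and>
     (\<forall>x y z. w (sc x y) z = - w y (circ sc pr x z))"
proof -
  have bc: "bilin (circ sc pr)" using bilin_circ[OF bs bp] .
  have bo: "bilin (odot sc pr)" using bilin_odot[OF bs bp] .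
  have bst: "bilin (star sc pr)" using bilin_star[OF bs bp] .
  have tt: "tau (tau S) = S" using tS by simp
  have WW: "(\<forall>xi eta. Phi xi eta) \<longleftrightarrow> (\<forall>u v. Phi (W u) (W v))" for Phi
    using Wsurj by (metis surjD)
  have "invariant sc pr S \<longleftrightarrow> (\<forall>x.
     (\<forall>xi eta. pairing xi (odot sc pr x (Tr S eta)) = pairing eta (circ sc pr (Tr S xi) x)) \<and>
     (\<forall>xi eta. pairing xi (star sc pr x (Tr S eta)) = pairing eta (pr (Tr S xi) x)))"
    unfolding invariant_def tm_iff[OF bilin_l[OF bo] bilin_r[OF bc]] tm_iff[OF bilin_l[OF bst] bilin_r[OF bp]] tt tS
    by blast
  also have "\<dots> \<longleftrightarrow> (\<forall>x.
     (\<forall>u v. c * w u (odot sc pr x v) = c * w v (circ sc pr u x)) \<and>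
     (\<forall>u v. c * w u (star sc pr x v) = c * w v (pr u x)))"
  proof -
    have s1: "pairing (W u) (odot sc pr x (Tr S (W v))) = c * w u (odot sc pr x v)" for x u v
      by (simp only: TS Wp lin_smul[OF bilin_l[OF bo]] bf_smul2[OF bf])
    have s2: "pairing (W v) (circ sc pr (Tr S (W u)) x) = c * w v (circ sc pr u x)" for x u v
      by (simp only: TS Wp lin_smul[OF bilin_r[OF bc]] bf_smul2[OF bf])
    have s3: "pairing (W u) (star sc pr x (Tr S (W v))) = c * w u (star sc pr x v)" for x u v
      by (simp only: TS Wp lin_smul[OF bilin_l[OF bst]] bf_smul2[OF bf])
    have s4: "pairing (W v) (pr (Tr S (W u)) x) = c * w v (pr u x)" for x u v
      by (simp only: TS Wp lin_smul[OF bilin_r[OF bp]] bf_smul2[OF bf])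
    have A: "(\<forall>xi eta. pairing xi (odot sc pr x (Tr S eta)) = pairing eta (circ sc pr (Tr S xi) x))
       \<longleftrightarrow> (\<forall>u v. c * w u (odot sc pr x v) = c * w v (circ sc pr u x))" for x
    proof -
      have "(\<forall>xi eta. pairing xi (odot sc pr x (Tr S eta)) = pairing eta (circ sc pr (Tr S xi) x))
       \<longleftrightarrow> (\<forall>u v. pairing (W u) (odot sc pr x (Tr S (W v))) = pairing (W v) (circ sc pr (Tr S (W u)) x))"
        by (rule WW)
      then show ?thesis by (simp only: s1 s2)
    qed
    have B: "(\<forall>xi eta. pairing xi (star sc pr x (Tr S eta)) = pairing eta (pr (Tr S xi) x))
       \<longleftrightarrow> (\<forall>u v. c * w u (star sc pr x v) = c * w v (pr u x))" for x
    proof -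
      have "(\<forall>xi eta. pairing xi (star sc pr x (Tr S eta)) = pairing eta (pr (Tr S xi) x))
       \<longleftrightarrow> (\<forall>u v. pairing (W u) (star sc pr x (Tr S (W v))) = pairing (W v) (pr (Tr S (W u)) x))"
        by (rule WW)
      then show ?thesis by (simp only: s3 s4)
    qed
    show ?thesis using A B by blast
  qed
  also have "\<dots> \<longleftrightarrow> (\<forall>x u v. w u (odot sc pr x v) = w v (circ sc pr u x)) \<and>
     (\<forall>x u v. w u (star sc pr x v) = w v (pr u x))"
    using c by auto
  also have "\<dots> \<longleftrightarrow> (\<forall>x y z. w (pr x y) z = w x (circ sc pr y z + circ sc pr z y)) \<and>
     (\<forall>x y z. w (sc x y) z = - w y (circ sc pr x z))"
  proof -
    have e2: "(\<forall>x u v. w u (star sc pr x v) = w v (pr u x)) \<longleftrightarrow>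
        (\<forall>x y z. w (pr x y) z = w x (circ sc pr y z + circ sc pr z y))"
    proof -
      have "w u (star sc pr x v) = w v (pr u x) \<longleftrightarrow> w (pr u x) v = w u (circ sc pr x v + circ sc pr v x)" for x u v
        unfolding star_def using sym[of u] sym[of v] by auto
      then show ?thesis by blast
    qed
    have e1: "(\<forall>x u v. w u (odot sc pr x v) = w v (circ sc pr u x)) \<longleftrightarrow>
        (\<forall>x y z. w (sc x y) z = - w y (circ sc pr x z))"
      if q1: "\<forall>x y z. w (pr x y) z = w x (circ sc pr y z + circ sc pr z y)"
    proof -
      have "w u (odot sc pr x v) = w (sc x v) u + w v (circ sc pr x u + circ sc pr u x)" for x u v
        using q1 sym by (simp add: odot_def bf_add2[OF bf])
      then have h': "w u (odot sc pr x v) = w v (circ sc pr u x) \<longleftrightarrow> w (sc x v) u = - w v (circ sc pr x u)" for x u v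
        by (simp add: bf_add2[OF bf] add.assoc[symmetric] eq_neg_iff_add_eq_0)
      show ?thesis using h' by blast
    qed
    show ?thesis using e1 e2 by blast
  qed
  finally show ?thesis .
qed



lemma lin_inj_surj:
  fixes f :: "('n::finite \<Rightarrow> 'k::field) \<Rightarrow> ('n \<Rightarrow> 'k)"
  assumes l: "lin f" and i: "inj f"
  shows "surj f"
proof -
  define g :: "'k^'n \<Rightarrow> 'k^'n" where "g v = vec_lambda (f (vec_nth v))" for v
  have lg: "Vector_Spaces.linear (*s) (*s) g"
  proof unfold_locales
    fix x y :: "'k^'n" and c :: 'k
    have "vec_nth (x + y) = vec_nth x + vec_nth y" by (rule ext) simp
    then show "g (x + y) = g x + g y"
      by (simp add: g_def lin_add[OF l] vec_eq_iff)
    have "vec_nth (c *s x) = smul c (vec_nth x)" by (rule ext) simp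
    then show "g (c *s x) = c *s g x"
      by (simp add: g_def lin_smul[OF l] vec_eq_iff)
  qed
  have ig: "inj g"
  proof (rule injI)
    fix x y assume "g x = g y"
    then have "f (vec_nth x) = f (vec_nth y)" by (simp add: g_def)
    then have "vec_nth x = vec_nth y" using i by (simp add: inj_eq)
    then show "x = y" by (simp add: vec_eq_iff)
  qed
  have sg: "surj g" using vec.linear_inj_imp_surj[OF lg ig] .
  have "\<exists>x. y = f x" for y
  proof -
    obtain v where "g v = vec_lambda y" using sg by (metis surjD)
    then have "f (vec_nth v) = y" by (simp add: g_def)
    then show ?thesis by metis
  qed
  then show ?thesis by (simp add: surj_def)
qed


lemma smul_add: "smul c (a + b) = smul c a + smul c b" by (rule ext) (simp add: algebra_simps)
lemma smul_diff: "smul c (a - b) = smul c a - smul c b" by (rule ext) (simp add: algebra_simps)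

context core
begin

lemma wP: "w (P a) b = - w a (P b + smul lam b)"
proof -
  have "w (P a) b + (w a (P b) + lam * w a b) = 0" using compat[of a b] by (simp add: add.assoc)
  then have "w (P a) b = - (w a (P b) + lam * w a b)" by (rule eq_neg_iff_add_eq_0[THEN iffD2])
  then show ?thesis by (simp add: bf_add2[OF bf] bf_smul2[OF bf] del: smul_apply)
qed

lemma nd_eq: "(\<And>z. w a z = w b z) \<Longrightarrow> a = b"
proof -
  assume h: "\<And>z. w a z = w b z"
  have "a - b = 0" by (rule nd) (simp add: bf_diff1[OF bf] h)
  then show ?thesis by simp
qed

lemma RB_sc:
  assumes q1: "\<And>x y z. w (pr x y) z = w x (ci y z + ci z y)"
    and q2: "\<And>x y z. w (sc x y) z = - w y (ci x z)"
    and rb: "\<And>x y. ci (P y) (P x) = P (ci y (P x) + ci (P y) x + smul lam (ci y x))"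
  shows "sc (P x) (P y) = P (sc (P x) y + sc x (P y) + smul lam (sc x y))"
proof (rule nd_eq)
  fix z
  define Qz where "Qz = P z + smul lam z"
  have key: "P (ci (P x) z) + smul lam (ci (P x) z) = ci (P x) Qz - P (ci x Qz)"
    using rb[of x z] unfolding Qz_def
    by (simp add: lin_add[OF linP] lin_smul[OF linP] lin_add[OF bilin_l[OF bc]] lin_smul[OF bilin_l[OF bc]]
        del: smul_apply)
  have "w (sc (P x) (P y)) z = - w (P y) (ci (P x) z)" using q2 .
  also have "\<dots> = w y (P (ci (P x) z) + smul lam (ci (P x) z))" by (simp add: wP)
  also have "\<dots> = w y (ci (P x) Qz - P (ci x Qz))" by (simp only: key)
  finally have L: "w (sc (P x) (P y)) z = w y (ci (P x) Qz - P (ci x Qz))" .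
  have "w (P (sc (P x) y + sc x (P y) + smul lam (sc x y))) z
      = - w (sc (P x) y + sc x (P y) + smul lam (sc x y)) Qz" by (simp add: wP Qz_def)
  also have "\<dots> = - (w (sc (P x) y) Qz + w (sc x (P y)) Qz + lam * w (sc x y) Qz)"
    by (simp add: bf_add1[OF bf] bf_smul1[OF bf] del: smul_apply)
  also have "\<dots> = w y (ci (P x) Qz) + w (P y) (ci x Qz) + lam * w y (ci x Qz)"
    by (simp add: q2)
  also have "\<dots> = w y (ci (P x) Qz) - w y (P (ci x Qz) + smul lam (ci x Qz)) + lam * w y (ci x Qz)"
    by (simp add: wP)
  also have "\<dots> = w y (ci (P x) Qz - P (ci x Qz))"
    by (simp add: bf_add2[OF bf] bf_diff2[OF bf] bf_smul2[OF bf] del: smul_apply)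
  finally show "w (sc (P x) (P y)) z = w (P (sc (P x) y + sc x (P y) + smul lam (sc x y))) z"
    using L by simp
qed

lemma RB_pr:
  assumes q1: "\<And>x y z. w (pr x y) z = w x (ci y z + ci z y)"
    and q2: "\<And>x y z. w (sc x y) z = - w y (ci x z)"
    and rb: "\<And>x y. ci (P y) (P x) = P (ci y (P x) + ci (P y) x + smul lam (ci y x))"
  shows "pr (P x) (P y) = P (pr (P x) y + pr x (P y) + smul lam (pr x y))"
proof (rule nd_eq)
  fix z
  define Qz where "Qz = P z + smul lam z"
  define St where "St a b = ci a b + ci b a" for a b
  have stl: "lin (St a)" for a
    unfolding St_def lin_def
    by (simp add: lin_add[OF bilin_l[OF bc]] lin_smul[OF bilin_l[OF bc]]
        lin_add[OF bilin_r[OF bc]] lin_smul[OF bilin_r[OF bc]] algebra_simps del: smul_apply)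
      (simp add: smul_def fun_eq_iff algebra_simps)
  have str: "lin (\<lambda>a. St a b)" for b
    unfolding St_def lin_def
    by (simp add: lin_add[OF bilin_l[OF bc]] lin_smul[OF bilin_l[OF bc]]
        lin_add[OF bilin_r[OF bc]] lin_smul[OF bilin_r[OF bc]] algebra_simps del: smul_apply)
      (simp add: smul_def fun_eq_iff algebra_simps)
  have rbS: "St (P y) (P z) = P (St y (P z) + St (P y) z + smul lam (St y z))"
    using rb[of z y] rb[of y z] unfolding St_def
    by (simp add: lin_add[OF linP] lin_smul[OF linP] smul_add del: smul_apply)
  have key: "- (P (St (P y) z) + smul lam (St (P y) z)) = P (St y Qz) - St (P y) Qz"
    using rbS unfolding Qz_def
    by (simp add: lin_add[OF linP] lin_smul[OF linP] lin_add[OF stl] lin_smul[OF stl] del: smul_apply)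
  have "w (pr (P x) (P y)) z = w (P x) (St (P y) z)" using q1 by (simp add: St_def)
  also have "\<dots> = - w x (P (St (P y) z) + smul lam (St (P y) z))" by (simp add: wP)
  also have "\<dots> = w x (P (St y Qz) - St (P y) Qz)" by (simp only: key[symmetric] bf_neg2[OF bf])
  finally have L: "w (pr (P x) (P y)) z = w x (P (St y Qz) - St (P y) Qz)" .
  have "w (P (pr (P x) y + pr x (P y) + smul lam (pr x y))) z
      = - w (pr (P x) y + pr x (P y) + smul lam (pr x y)) Qz" by (simp add: wP Qz_def)
  also have "\<dots> = - (w (pr (P x) y) Qz + w (pr x (P y)) Qz + lam * w (pr x y) Qz)"
    by (simp add: bf_add1[OF bf] bf_smul1[OF bf] del: smul_apply)
  also have "\<dots> = - (w (P x) (St y Qz) + w x (St (P y) Qz) + lam * w x (St y Qz))"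
    by (simp add: q1 St_def)
  also have "\<dots> = w x (P (St y Qz) + smul lam (St y Qz)) - w x (St (P y) Qz) - lam * w x (St y Qz)"
    by (simp add: wP)
  also have "\<dots> = w x (P (St y Qz) - St (P y) Qz)"
    by (simp add: bf_add2[OF bf] bf_diff2[OF bf] bf_smul2[OF bf] del: smul_apply)
  finally show "w (pr (P x) (P y)) z = w (P (pr (P x) y + pr x (P y) + smul lam (pr x y))) z"
    using L by simp
qed

end



lemma tau_add: "tau (a + b) = tau a + tau b" by (simp add: tau_def fun_eq_iff)
lemma tau_tau: "tau (tau a) = a" by (simp add: tau_def)

lemma lin_inv: "lin f \<Longrightarrow> bij f \<Longrightarrow> lin (inv f)"
proof -
  assume l: "lin f" and b: "bij f"
  have fi: "f (inv f x) = x" for x using b by (simp add: bij_is_surj surj_f_inv_f)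
  have if_: "inv f (f x) = x" for x using b by (simp add: bij_is_inj inv_f_f)
  show ?thesis unfolding lin_def
  proof (intro conjI allI)
    fix x y
    have "inv f (x + y) = inv f (f (inv f x) + f (inv f y))" by (simp add: fi)
    also have "\<dots> = inv f x + inv f y" by (simp add: lin_add[OF l, symmetric] if_)
    finally show "inv f (x + y) = inv f x + inv f y" .
  next
    fix c x
    have "inv f (smul c x) = inv f (smul c (f (inv f x)))" by (simp add: fi)
    also have "\<dots> = smul c (inv f x)" by (simp add: lin_smul[OF l, symmetric] if_ del: smul_apply)
    finally show "inv f (smul c x) = smul c (inv f x)" .
  qed
qed

lemma pairing_ext: "(\<And>eta. pairing eta a = pairing eta b) \<Longrightarrow> a = b"
  by (rule ext) (metis pairing_basis1)

lemma bf_lf2: "bilin_form w \<Longrightarrow> lf (w x)" by (simp add: lf_def bilin_form_def)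

lemma sharp_lin: "bilin_form w \<Longrightarrow> lin (sharp w)"
  by (simp add: lin_def sharp_def bilin_form_def fun_eq_iff smul_def)

lemma sharp_pairing: "bilin_form w \<Longrightarrow> pairing (sharp w x) u = w x u"
  by (simp add: pairing_def sharp_def lf_expand[OF bf_lf2, of w x u] mult.commute)

lemma pairing_add1: "pairing (x + y) u = pairing x u + pairing y u"
  using pairing_lf1 unfolding lf_def by blast
lemma pairing_add2: "pairing z (x + y) = pairing z x + pairing z y"
  using pairing_lf2 unfolding lf_def by blast
lemma pairing_smul1: "pairing (smul c x) u = c * pairing x u"
  using pairing_lf1 unfolding lf_def by blast
lemma pairing_smul2: "pairing z (smul c x) = c * pairing z x"
  using pairing_lf2 unfolding lf_def by blast

lemma smul_smul: "smul a (smul b x) = smul (a * b) x" by (rule ext) simp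
lemma smul_one: "smul 1 x = x" by (rule ext) simp


lemma partI:
  fixes lam :: "'k::field"
    and sc pr :: "('n::finite \<Rightarrow> 'k) \<Rightarrow> ('n \<Rightarrow> 'k) \<Rightarrow> ('n \<Rightarrow> 'k)"
  assumes lam: "lam \<noteq> 0" and LD: "LDA sc pr" and fac: "factorizable sc pr r"
    and wdef: "w = (\<lambda>x y. - lam * pairing (inv (Tr (r + tau r)) x) y)"
  shows "quadRB sc pr (\<lambda>x. Tr r (sharp w x)) w lam"
proof -
  define s where "s = r + tau r"
  define B where "B = Tr s"
  define Bi where "Bi = inv B"
  define W where "W = sharp w"
  define P where "P = (\<lambda>x. Tr r (sharp w x))"
  have bs: "bilin sc" and bp: "bilin pr" using LD by (auto simp: LDA_def)
  have S0: "Sop sc pr r = 0" and invs: "invariant sc pr s" and bB: "bij B"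
    using fac by (auto simp: factorizable_def s_def B_def)
  have linB: "lin B" unfolding B_def by (rule Tr_lin)
  have linBi: "lin Bi" unfolding Bi_def by (rule lin_inv[OF linB bB])
  have BBi: "B (Bi x) = x" for x using bB by (simp add: Bi_def bij_is_surj surj_f_inv_f)
  have wd: "w x y = - lam * pairing (Bi x) y" for x y by (simp add: wdef Bi_def B_def s_def)
  have bf: "bilin_form w"
    unfolding bilin_form_def wd
    by (simp add: lin_add[OF linBi] lin_smul[OF linBi] pairing_add1 pairing_add2 pairing_smul1 pairing_smul2 algebra_simps del: smul_apply)
  have tS: "tau s = s" by (simp add: s_def tau_add tau_tau add.commute)
  have trs: "pairing a (Tr s b) = pairing b (Tr s a)" for a b
    using Tr_tau[of a s b] tS by simp
  have sym: "w x y = w y x" for x y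
  proof -
    have "pairing (Bi x) y = pairing (Bi x) (B (Bi y))" by (simp add: BBi)
    also have "\<dots> = pairing (Bi y) (B (Bi x))" unfolding B_def by (rule trs)
    also have "\<dots> = pairing (Bi y) x" by (simp add: BBi)
    finally show ?thesis by (simp add: wd)
  qed
  have Wx: "W x = smul (- lam) (Bi x)" for x
    by (rule ext) (simp add: W_def sharp_def wd pairing_basis2)
  have Wp: "pairing (W x) u = w x u" for x u
    unfolding W_def by (rule sharp_pairing[OF bf])
  have BW: "B (W x) = smul (- lam) x" for x
    by (simp add: Wx lin_smul[OF linB] BBi del: smul_apply)
  have Wsurj: "surj W"
  proof -
    have "y = W (B (smul (- inverse lam) y))" for y
      using lam by (simp add: Wx Bi_def inv_f_f[OF bij_is_inj[OF bB]] smul_smul smul_one del: smul_apply)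
    then show ?thesis unfolding surj_def by blast
  qed
  have nd: "x = 0" if h: "\<And>y. w x y = 0" for x
  proof -
    have "Bi x i = 0" for i using h[of "basis i"] lam by (simp add: wd pairing_basis2)
    then have "Bi x = 0" by (simp add: fun_eq_iff)
    then have "B (Bi x) = 0" by (simp add: lin_zero[OF linB])
    then show ?thesis by (simp add: BBi)
  qed
  have TrW: "Tr r (W x) = P x" for x by (simp add: P_def W_def)
  have TrtW: "Tr (tau r) (W x) = - (P x + smul lam x)" for x
  proof -
    have "B (W x) = Tr r (W x) + Tr (tau r) (W x)" by (simp add: B_def s_def Tr_add)
    then have "Tr (tau r) (W x) = smul (- lam) x - P x" by (simp add: BW TrW)
    then show ?thesis by (simp add: fun_eq_iff)
  qed
  have linP: "lin P" unfolding P_def by (rule lin_comp[OF Tr_lin sharp_lin[OF bf]])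
  have compat: "w (P x) y + w x (P y) + lam * w x y = 0" for x y
  proof -
    have "w (P x) y + w x (P y) = pairing (W y) (Tr r (W x)) + pairing (W y) (Tr (tau r) (W x))"
      by (simp add: Wp TrW sym[of "P x"] Tr_tau)
    also have "\<dots> = pairing (W y) (B (W x))"
      by (simp add: B_def s_def Tr_add pairing_add2)
    also have "\<dots> = - lam * w x y"
      by (simp add: BW Wp sym[of y] pairing_smul2 del: smul_apply)
    finally show ?thesis by simp
  qed
  interpret core sc pr w W P r lam
    by (unfold_locales) (use bs bp bf sym nd Wsurj Wp TrW TrtW linP compat in auto)
  have TS: "Tr s (W x) = smul (- lam) x" for x using BW by (simp add: B_def)
  have q: "(\<forall>x y z. w (pr x y) z = w x (circ sc pr y z + circ sc pr z y)) \<and>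
     (\<forall>x y z. w (sc x y) z = - w y (circ sc pr x z))"
    using inv_iff[OF bs bp bf sym Wsurj Wp tS TS] lam invs by simp
  have q1: "\<And>x y z. w (pr x y) z = w x (circ sc pr y z + circ sc pr z y)"
    and q2: "\<And>x y z. w (sc x y) z = - w y (circ sc pr x z)" using q by auto
  have rb: "\<And>x y. ci (P y) (P x) = P (ci y (P x) + ci (P y) x + smul lam (ci y x))"
    using Sop_iff[OF q1 q2] S0 by auto
  have quad: "quadratic sc pr w"
    unfolding quadratic_def using LD bf sym nd q1 q2 by auto
  have RB: "RB_op sc pr lam P"
    unfolding RB_op_def using linP RB_sc[OF q1 q2 rb] RB_pr[OF q1 q2 rb] by auto
  show ?thesis
    unfolding quadRB_def P_def[symmetric] using quad RB compat by auto
qed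


lemma partII:
  fixes lam :: "'k::field"
    and sc pr :: "('n::finite \<Rightarrow> 'k) \<Rightarrow> ('n \<Rightarrow> 'k) \<Rightarrow> ('n \<Rightarrow> 'k)"
  assumes lam: "lam \<noteq> 0" and Q: "quadRB sc pr P w lam" and TrP: "Tr r = P \<circ> inv (sharp w)"
  shows "factorizable sc pr r"
proof -
  define W where "W = sharp w"
  have LD: "LDA sc pr" and bf: "bilin_form w" and sym: "\<And>x y. w x y = w y x"
    and nd0: "\<forall>x. (\<forall>y. w x y = 0) \<longrightarrow> x = 0"
    and q1: "\<And>x y z. w (pr x y) z = w x (circ sc pr y z + circ sc pr z y)"
    and q2: "\<And>x y z. w (sc x y) z = - w y (circ sc pr x z)"
    and linP: "lin P"
    and rbs: "\<And>x y. sc (P x) (P y) = P (sc (P x) y + sc x (P y) + smul lam (sc x y))"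
    and rbp: "\<And>x y. pr (P x) (P y) = P (pr (P x) y + pr x (P y) + smul lam (pr x y))"
    and compat: "\<And>x y. w (P x) y + w x (P y) + lam * w x y = 0"
    using Q unfolding quadRB_def quadratic_def RB_op_def by auto
  have nd: "x = 0" if "\<And>y. w x y = 0" for x using nd0 that by blast
  have bs: "bilin sc" and bp: "bilin pr" using LD by (auto simp: LDA_def)
  have Wp: "pairing (W x) u = w x u" for x u
    unfolding W_def by (rule sharp_pairing[OF bf])
  have linW: "lin W" unfolding W_def by (rule sharp_lin[OF bf])
  have Winj: "inj W"
  proof (rule injI)
    fix x y assume "W x = W y"
    then have "W (x - y) = 0" by (simp add: lin_diff[OF linW])
    then have "w (x - y) u = 0" for u using Wp[of "x - y" u] by (simp add: pairing_def)
    then have "x - y = 0" by (rule nd)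
    then show "x = y" by simp
  qed
  have Wsurj: "surj W" by (rule lin_inj_surj[OF linW Winj])
  have TrW: "Tr r (W x) = P x" for x
    by (simp add: TrP W_def[symmetric] inv_f_f[OF Winj])
  have TrtW: "Tr (tau r) (W x) = - (P x + smul lam x)" for x
  proof (rule pairing_ext)
    fix eta
    obtain y where y: "eta = W y" using Wsurj by (metis surjD)
    have "pairing (W y) (Tr (tau r) (W x)) = w x (P y)" by (simp add: Tr_tau TrW Wp)
    also have "\<dots> = - (w (P x) y + lam * w x y)"
    proof -
      have "w x (P y) + (w (P x) y + lam * w x y) = 0" using compat[of x y] by (simp add: algebra_simps)
      then show ?thesis by (rule eq_neg_iff_add_eq_0[THEN iffD2])
    qed
    also have "\<dots> = pairing (W y) (- (P x + smul lam x))"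
      by (simp add: Wp bf_neg2[OF bf] bf_add2[OF bf] bf_smul2[OF bf] bf_diff1[OF bf] bf_neg1[OF bf] bf_smul1[OF bf] sym[of y] del: smul_apply)
    finally show "pairing eta (Tr (tau r) (W x)) = pairing eta (- (P x + smul lam x))" by (simp add: y)
  qed
  interpret core sc pr w W P r lam
    by (unfold_locales) (use bs bp bf sym nd Wsurj Wp TrW TrtW linP compat in auto)
  have rb: "\<And>x y. ci (P y) (P x) = P (ci y (P x) + ci (P y) x + smul lam (ci y x))"
  proof -
    fix x y
    show "ci (P y) (P x) = P (ci y (P x) + ci (P y) x + smul lam (ci y x))"
      unfolding circ_def rbs rbp
      by (simp add: lin_add[OF linP, symmetric] smul_add del: smul_apply) (simp add: algebra_simps)
  qed
  have S0: "Sop sc pr r = 0" using Sop_iff[OF q1 q2] rb by auto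
  define S where "S = r + tau r"
  have tS: "tau S = S" by (simp add: S_def tau_add tau_tau add.commute)
  have TS: "Tr S (W x) = smul (- lam) x" for x
    by (simp add: S_def Tr_add TrW TrtW fun_eq_iff)
  have invS: "invariant sc pr S"
    using inv_iff[OF bs bp bf sym Wsurj Wp tS TS] lam q1 q2 by simp
  have TSi: "Tr S xi = smul (- lam) (inv W xi)" for xi
    using TS[of "inv W xi"] by (simp add: surj_f_inv_f[OF Wsurj] del: smul_apply)
  have bij: "bij (Tr S)"
  proof (rule bijI)
    show "inj (Tr S)"
    proof (rule injI)
      fix a b assume "Tr S a = Tr S b"
      then have "smul (- lam) (inv W a) = smul (- lam) (inv W b)" by (simp add: TSi del: smul_apply)
      then have "inv W a = inv W b" using lam by (simp add: fun_eq_iff)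
      then have "W (inv W a) = W (inv W b)" by simp
      then show "a = b" by (simp add: surj_f_inv_f[OF Wsurj])
    qed
    have "y = Tr S (W (smul (- inverse lam) y))" for y
      using lam by (simp add: TS smul_smul smul_one del: smul_apply)
    then show "surj (Tr S)" unfolding surj_def by blast
  qed
  show ?thesis unfolding factorizable_def using S0 invS bij by (simp add: S_def)
qed


theorem mainTheorem17:
  fixes lam :: "'k::field"
    and succ prec :: "('n::finite \<Rightarrow> 'k) \<Rightarrow> ('n \<Rightarrow> 'k) \<Rightarrow> ('n \<Rightarrow> 'k)"
  assumes "lam \<noteq> 0"
  shows "(\<forall>r. LDA succ prec \<and> factorizable succ prec r \<longrightarrow>
            (let w = (\<lambda>x y. - lam * pairing (inv (Tr (r + tau r)) x) y)
             in quadRB succ prec (\<lambda>x. Tr r (sharp w x)) w lam))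
       \<and> (\<forall>P w r. quadRB succ prec P w lam \<and> Tr r = P \<circ> inv (sharp w) \<longrightarrow>
            factorizable succ prec r)"
proof (intro conjI allI impI)
  fix r
  assume h: "LDA succ prec \<and> factorizable succ prec r"
  show "let w = (\<lambda>x y. - lam * pairing (inv (Tr (r + tau r)) x) y)
             in quadRB succ prec (\<lambda>x. Tr r (sharp w x)) w lam"
    unfolding Let_def using partI[OF assms _ _ refl] h by blast
next
  fix P w r
  assume h: "quadRB succ prec P w lam \<and> Tr r = P \<circ> inv (sharp w)"
  show "factorizable succ prec r" using partII[OF assms] h by blast
qed

end
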